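(* Let $L_{kal}$ be the steady-state Kalman filter gain. Then, for every selection matrix $D_a$ and every symmetric positive semidefinite $W$, $L_{kal}$ is an optimal solution of $$\max_{L\in\mathbb{R}^{n_x\times n_y},\ \lambda\in\mathbb{R}_+}\ \lambda\quad\text{s.t.}\quad \tfrac12 D_a^\top\Sigma_{r_\omega}^{-1}(L)D_a-\lambda D_a^\top W D_a\succeq0,\quad \rho(A-LC)<1,$$ i.e., $J_0(L_{kal})\ge J_0(L)$ for every $L$ with $\rho(A-LC)<1$.
   Context: Consider the discrete-time system $x(k+1)=Ax(k)+Bu(k)+B_\omega\omega(k)$, $y(k)=Cx(k)+D_\omega\omega(k)+y_a(k)$, with $x\in\mathbb{R}^{n_x}$, $y\in\mathbb{R}^{n_y}$, $\omega(k)\sim\mathcal N(0,I_{n_\omega})$ i.i.d., $(A,C)$ detectable, $(A,B_\omega)$ stabilizable, and an observer $\hat x(k+1)=A\hat x(k)+Bu(k)+L(y(k)-C\hat x(k))$ with residual $r(k)=y(k)-C\hat x(k)$. The attack is $y_a(k)=D_a\bar a$ for $k\ge0$ (zero before), where $D_a\in\mathbb{R}^{n_y\times n_a}$ has entries $(j_i,i)=1$ for the compromised sensor indices $j_1<\dots<j_{n_a}$ and zeros elsewhere; $W\in\mathbb{R}^{n_y\times n_y}$ is symmetric positive semidefinite. For $L$ with $\rho(A-LC)<1$ ($\rho$ = spectral radius), $\Sigma_{\tilde x}(L)$ solves $\Sigma=(A-LC)\Sigma(A-LC)^\top+(B_\omega-LD_\omega)(B_\omega-LD_\omega)^\top$ and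 $\Sigma_{r_\omega}(L)=C\Sigma_{\tilde x}(L)C^\top+D_\omega D_\omega^\top$ (assumed invertible). The steady-state Kalman filter gain $L_{kal}$ (predictor form matching the observer above) is stabilizing and minimizes the residual covariance: $\Sigma_{r_\omega}(L_{kal})\preceq\Sigma_{r_\omega}(L)$ for all $L$ with $\rho(A-LC)<1$. Define $J_0(L)=\min_{\bar a\in\mathbb{R}^{n_a}}\frac12\bar a^\top D_a^\top\Sigma_{r_\omega}^{-1}(L)D_a\bar a$ subject to $\bar a^\top D_a^\top WD_a\bar a\ge1$. $\mathbb{R}_+$ denotes the positive reals. *)

theory Defs
  imports "HOL-Analysis.Analysis"
begin

definition eigenvalues_c :: "real^'n^'n \<Rightarrow> complex set" where
  "eigenvalues_c M = {\<mu>. \<exists>v :: complex^'n. v \<noteq> 0 \<and>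
      (\<chi> i j. complex_of_real (M $ i $ j)) *v v = \<mu> *s v}"

definition spec_rad :: "real^'n^'n \<Rightarrow> real" where
  "spec_rad M = Sup (cmod ` eigenvalues_c M)"

definition psd :: "real^'n^'n \<Rightarrow> bool" where
  "psd M \<longleftrightarrow> transpose M = M \<and> (\<forall>x. 0 \<le> x \<bullet> (M *v x))"

definition loewner_le :: "real^'n^'n \<Rightarrow> real^'n^'n \<Rightarrow> bool" where
  "loewner_le M N \<longleftrightarrow> psd (N - M)"

definition detectable :: "real^'nx^'nx \<Rightarrow> real^'nx^'ny \<Rightarrow> bool" where
  "detectable A C \<longleftrightarrow> (\<exists>L :: real^'ny^'nx. spec_rad (A - L ** C) < 1)"

definition stabilizable :: "real^'nx^'nx \<Rightarrow> real^'nw^'nx \<Rightarrow> bool" where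
  "stabilizable A B \<longleftrightarrow> (\<exists>K :: real^'nx^'nw. spec_rad (A - B ** K) < 1)"

definition Sigma_x :: "real^'nx^'nx \<Rightarrow> real^'nx^'ny \<Rightarrow> real^'nw^'nx \<Rightarrow> real^'nw^'ny
    \<Rightarrow> real^'ny^'nx \<Rightarrow> real^'nx^'nx" where
  "Sigma_x A C Bw Dw L = (THE S. S = (A - L ** C) ** S ** transpose (A - L ** C)
       + (Bw - L ** Dw) ** transpose (Bw - L ** Dw))"

definition Sigma_r :: "real^'nx^'nx \<Rightarrow> real^'nx^'ny \<Rightarrow> real^'nw^'nx \<Rightarrow> real^'nw^'ny
    \<Rightarrow> real^'ny^'nx \<Rightarrow> real^'ny^'ny" where
  "Sigma_r A C Bw Dw L = C ** Sigma_x A C Bw Dw L ** transpose C + Dw ** transpose Dw"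

definition sel_matrix :: "('na \<Rightarrow> 'ny) \<Rightarrow> real^'na^'ny" where
  "sel_matrix j = (\<chi> r i. if r = j i then 1 else 0)"

text \<open>J_0(L): minimum over the constraint set (Inf in the extended reals; +\<infinity> if infeasible).\<close>
definition J0 :: "real^'nx^'nx \<Rightarrow> real^'nx^'ny \<Rightarrow> real^'nw^'nx \<Rightarrow> real^'nw^'ny
    \<Rightarrow> real^'na^'ny \<Rightarrow> real^'ny^'ny \<Rightarrow> real^'ny^'nx \<Rightarrow> ereal" where
  "J0 A C Bw Dw Da W L = Inf ((\<lambda>a. ereal (1/2 * ((Da *v a) \<bullet> (matrix_inv (Sigma_r A C Bw Dw L) *v (Da *v a)))))
      ` {a. 1 \<le> (Da *v a) \<bullet> (W *v (Da *v a))})"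

definition feasible :: "real^'nx^'nx \<Rightarrow> real^'nx^'ny \<Rightarrow> real^'nw^'nx \<Rightarrow> real^'nw^'ny
    \<Rightarrow> real^'na^'ny \<Rightarrow> real^'ny^'ny \<Rightarrow> real^'ny^'nx \<Rightarrow> real \<Rightarrow> bool" where
  "feasible A C Bw Dw Da W L lam \<longleftrightarrow> lam > 0 \<and> spec_rad (A - L ** C) < 1 \<and>
     psd ((1/2) *\<^sub>R (transpose Da ** matrix_inv (Sigma_r A C Bw Dw L) ** Da)
          - lam *\<^sub>R (transpose Da ** W ** Da))"

end

theory Submission
  imports Defs "Jordan_Normal_Form.Spectral_Radius"
begin

no_notation Matrix.vec_index (infixl \<open>$\<close> 100)
no_notation Matrix.scalar_prod (infix \<open>\<bullet>\<close> 70)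

fun mpow :: "real^'n^'n \<Rightarrow> nat \<Rightarrow> real^'n^'n" where
  "mpow M 0 = Finite_Cartesian_Product.mat 1"
| "mpow M (Suc k) = M ** mpow M k"

lemma mat_tendstoI:
  fixes f :: "'b \<Rightarrow> real^'n^'m"
  assumes "\<And>i j. ((\<lambda>x. f x $ i $ j) \<longlongrightarrow> a $ i $ j) F"
  shows "(f \<longlongrightarrow> a) F"
  by (rule vec_tendstoI, rule vec_tendstoI, rule assms)

lemma tendsto_mmult:
  fixes f :: "'b \<Rightarrow> real^'n^'m" and g :: "'b \<Rightarrow> real^'k^'n"
  assumes "(f \<longlongrightarrow> a) F" "(g \<longlongrightarrow> b) F"
  shows "((\<lambda>x. f x ** g x) \<longlongrightarrow> a ** b) F"
  by (rule mat_tendstoI, unfold matrix_matrix_mult_def vec_lambda_beta,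
      intro tendsto_sum tendsto_mult tendsto_vec_nth assms)

lemma tendsto_transp:
  fixes f :: "'b \<Rightarrow> real^'n^'m"
  assumes "(f \<longlongrightarrow> a) F"
  shows "((\<lambda>x. transpose (f x)) \<longlongrightarrow> transpose a) F"
  by (rule mat_tendstoI, unfold transpose_def vec_lambda_beta,
      intro tendsto_vec_nth assms)

lemma tendsto_mvmult:
  fixes f :: "'b \<Rightarrow> real^'n^'m"
  assumes "(f \<longlongrightarrow> a) F"
  shows "((\<lambda>x. f x *v v) \<longlongrightarrow> a *v v) F"
  by (rule vec_tendstoI, unfold matrix_vector_mult_def vec_lambda_beta,
      intro tendsto_sum tendsto_mult tendsto_vec_nth assms tendsto_const)

lemma dot_transp: "(x::real^'m) \<bullet> (A *v y) = (transpose A *v x) \<bullet> (y::real^'n)"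
  by (simp add: transpose_matrix_vector dot_lmul_matrix)

lemma transp_add: "transpose (A + B) = transpose A + transpose (B::real^'n^'m)"
  by (simp add: transpose_def Finite_Cartesian_Product.vec_eq_iff)

lemma mmult_radd: "(A + B) ** C = A ** C + B ** (C::real^'k^'n)"
  by (simp add: matrix_matrix_mult_def Finite_Cartesian_Product.vec_eq_iff algebra_simps sum.distrib)

lemma mmult_ldiff: "A ** (B - C) = A ** B - A ** (C::real^'k^'n)"
  by (simp add: matrix_matrix_mult_def Finite_Cartesian_Product.vec_eq_iff algebra_simps sum_subtractf)
lemma mmult_rdiff: "(A - B) ** C = A ** C - B ** (C::real^'k^'n)"
  by (simp add: matrix_matrix_mult_def Finite_Cartesian_Product.vec_eq_iff algebra_simps sum_subtractf)

lemma mmult_zero: "(0::real^'n^'m) ** A = 0" "A ** (0::real^'n^'m) = 0"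
  by (simp_all add: matrix_matrix_mult_def Finite_Cartesian_Product.vec_eq_iff)

lemma transp_zero: "transpose (0::real^'n^'m) = 0"
  by (simp add: transpose_def Finite_Cartesian_Product.vec_eq_iff)

lemma lin_T: "linear (\<lambda>X::real^'n^'n. X - M ** X ** transpose M)"
  by (rule linearI) (simp_all add: matrix_add_ldistrib mmult_radd
       matrix_scalar_ac scalar_matrix_assoc algebra_simps)

lemma mpow_iter:
  assumes "X = M ** X ** transpose M"
  shows "X = mpow M k ** X ** transpose (mpow M k)"
proof (induction k)
  case 0 then show ?case by (simp add: transpose_mat matrix_mul_lid matrix_mul_rid)
next
  case (Suc k)
  have "mpow M (Suc k) ** X ** transpose (mpow M (Suc k))
      = M ** (mpow M k ** X ** transpose (mpow M k)) ** transpose M"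
    by (simp add: matrix_transpose_mul matrix_mul_assoc)
  also have "\<dots> = X" by (simp only: Suc.IH[symmetric] assms[symmetric])
  finally show ?case by (rule sym)
qed

lemma lyap_inj:
  assumes lim: "(mpow M \<longlongrightarrow> 0) sequentially"
  shows "inj (\<lambda>X::real^'n^'n. X - M ** X ** transpose M)"
proof -
  have "X = 0" if "X - M ** X ** transpose M = 0" for X :: "real^'n^'n"
  proof -
    have e: "X = M ** X ** transpose M" using that by simp
    have "((\<lambda>k. mpow M k ** X ** transpose (mpow M k)) \<longlongrightarrow> 0 ** X ** transpose 0) sequentially"
      by (intro tendsto_mmult tendsto_transp lim tendsto_const)
    moreover have "(\<lambda>k. mpow M k ** X ** transpose (mpow M k)) = (\<lambda>k. X)"
      by (rule ext, rule mpow_iter[OF e, symmetric])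
    ultimately have "((\<lambda>k. X) \<longlongrightarrow> 0) sequentially"
      by (simp add: mmult_zero transp_zero)
    thus ?thesis by (simp add: LIMSEQ_const_iff)
  qed
  thus ?thesis using lin_T[of M] by (simp add: linear_injective_0)
qed

lemma lyap_ex1:
  assumes lim: "(mpow M \<longlongrightarrow> 0) sequentially"
  shows "\<exists>!S::real^'n^'n. S = M ** S ** transpose M + Q"
proof -
  define T where "T = (\<lambda>X::real^'n^'n. X - M ** X ** transpose M)"
  have injT: "inj T" unfolding T_def by (rule lyap_inj[OF lim])
  have surjT: "surj T" unfolding T_def
    by (rule eucl.linear_inj_imp_surj[OF lin_T lyap_inj[OF lim]])
  obtain S where QS: "T S = Q" using surjD[OF surjT, of Q] by (metis)
  have eqv: "(X = M ** X ** transpose M + Q) \<longleftrightarrow> T X = Q" for X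
    unfolding T_def by (metis add_diff_cancel_left' diff_add_cancel add.commute)
  show ?thesis unfolding eqv
  proof (rule ex1I[of _ S])
    show "T S = Q" by (rule QS)
    fix S' assume "T S' = Q"
    thus "S' = S" using injD[OF injT, of S' S] QS by simp
  qed
qed

lemma quad_conj:
  "x \<bullet> ((M ** P ** transpose M) *v x) = (transpose M *v x) \<bullet> (P *v (transpose M *v (x::real^'n)))"
  by (simp add: matrix_vector_mul_assoc[symmetric] dot_transp)

lemma quad_gram: "0 \<le> (x::real^'n) \<bullet> ((G ** transpose G) *v x)"
  by (simp add: matrix_vector_mul_assoc[symmetric] dot_transp)

lemma lyap_psd:
  assumes lim: "(mpow M \<longlongrightarrow> 0) sequentially"
    and S: "S = M ** S ** transpose M + G ** transpose G"
  shows "psd (S::real^'n^'n)"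
proof -
  have symQ: "transpose (G ** transpose G) = G ** transpose G"
    by (simp add: matrix_transpose_mul transpose_transpose)
  have "transpose S = transpose (M ** S ** transpose M + G ** transpose G)"
    by (rule arg_cong[OF S])
  also have "\<dots> = M ** transpose S ** transpose M + G ** transpose G"
    by (simp add: transp_add matrix_transpose_mul transpose_transpose symQ matrix_mul_assoc)
  finally have "transpose S = M ** transpose S ** transpose M + G ** transpose G" .
  hence sym: "transpose S = S" using lyap_ex1[OF lim, of "G ** transpose G"] S by blast
  have bound: "x \<bullet> ((mpow M k ** S ** transpose (mpow M k)) *v x) \<le> x \<bullet> (S *v x)" for k x
  proof (induction k arbitrary: x)
    case 0 then show ?case by (simp add: transpose_mat matrix_mul_lid matrix_mul_rid)
  next
    case (Suc k)
    have "x \<bullet> ((mpow M (Suc k) ** S ** transpose (mpow M (Suc k))) *v x)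
        = x \<bullet> ((M ** (mpow M k ** S ** transpose (mpow M k)) ** transpose M) *v x)"
      by (simp add: matrix_transpose_mul matrix_mul_assoc)
    also have "\<dots> = (transpose M *v x) \<bullet> ((mpow M k ** S ** transpose (mpow M k)) *v (transpose M *v x))"
      by (rule quad_conj)
    also have "\<dots> \<le> (transpose M *v x) \<bullet> (S *v (transpose M *v x))" by (rule Suc)
    also have "\<dots> = x \<bullet> ((M ** S ** transpose M) *v x)" by (rule quad_conj[symmetric])
    also have "\<dots> \<le> x \<bullet> ((M ** S ** transpose M) *v x) + x \<bullet> ((G ** transpose G) *v x)"
      using quad_gram[of x G] by simp
    also have "\<dots> = x \<bullet> ((M ** S ** transpose M + G ** transpose G) *v x)"
      by (simp add: matrix_vector_mult_add_rdistrib inner_add_right)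
    also have "\<dots> = x \<bullet> (S *v x)" by (simp only: S[symmetric])
    finally show ?case .
  qed
  have "0 \<le> x \<bullet> (S *v x)" for x
  proof -
    have "((\<lambda>k. x \<bullet> ((mpow M k ** S ** transpose (mpow M k)) *v x)) \<longlongrightarrow>
           x \<bullet> ((0 ** S ** transpose 0) *v x)) sequentially"
      by (intro tendsto_inner tendsto_const tendsto_mvmult tendsto_mmult tendsto_transp lim)
    hence "((\<lambda>k. x \<bullet> ((mpow M k ** S ** transpose (mpow M k)) *v x)) \<longlongrightarrow> 0) sequentially"
      by (simp add: mmult_zero transp_zero)
    thus ?thesis using bound by (intro LIMSEQ_le_const2[where x=0]) auto
  qed
  thus ?thesis using sym unfolding psd_def by auto
qed

lemma eig_bound:
  fixes M :: "real^'n^'n"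
  assumes "\<mu> \<in> eigenvalues_c M"
  shows "cmod \<mu> \<le> (\<Sum>i\<in>UNIV. \<Sum>j\<in>UNIV. \<bar>M $ i $ j\<bar>)"
proof -
  from assms obtain w :: "complex^'n" where w0: "w \<noteq> 0"
    and ev: "(\<chi> i j. complex_of_real (M $ i $ j)) *v w = \<mu> *s w"
    unfolding eigenvalues_c_def by auto
  have fin: "finite (range (\<lambda>j. cmod (w $ j)))" by simp
  have "Max (range (\<lambda>j. cmod (w $ j))) \<in> range (\<lambda>j. cmod (w $ j))"
    by (rule Max_in[OF fin]) simp
  then obtain i where i: "cmod (w $ i) = Max (range (\<lambda>j. cmod (w $ j)))"
    by (metis rangeE)
  have le: "cmod (w $ j) \<le> cmod (w $ i)" for j using i fin by simp
  have pos: "cmod (w $ i) > 0"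
  proof (rule ccontr)
    assume "\<not> ?thesis"
    hence "cmod (w $ j) = 0" for j using le[of j] by (metis norm_ge_zero order.trans not_less order.antisym)
    hence "w = 0" by (simp add: Finite_Cartesian_Product.vec_eq_iff)
    thus False using w0 by simp
  qed
  have "cmod \<mu> * cmod (w $ i) = cmod (\<Sum>j\<in>UNIV. complex_of_real (M $ i $ j) * w $ j)"
    using arg_cong[OF ev, of "\<lambda>v. cmod (v $ i)"]
    by (simp add: matrix_vector_mult_def norm_mult)
  also have "\<dots> \<le> (\<Sum>j\<in>UNIV. \<bar>M $ i $ j\<bar> * cmod (w $ j))"
    by (rule order.trans[OF norm_sum]) (simp add: norm_mult)
  also have "\<dots> \<le> (\<Sum>j\<in>UNIV. \<bar>M $ i $ j\<bar> * cmod (w $ i))"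
    by (intro sum_mono mult_left_mono le) auto
  also have "\<dots> = (\<Sum>j\<in>UNIV. \<bar>M $ i $ j\<bar>) * cmod (w $ i)"
    by (simp add: sum_distrib_right)
  finally have "cmod \<mu> \<le> (\<Sum>j\<in>UNIV. \<bar>M $ i $ j\<bar>)" using pos by simp
  also have "\<dots> \<le> (\<Sum>i\<in>UNIV. \<Sum>j\<in>UNIV. \<bar>M $ i $ j\<bar>)"
    by (rule member_le_sum) (auto intro: sum_nonneg)
  finally show ?thesis .
qed

lemma eig_le_spec_rad:
  fixes M :: "real^'n^'n"
  assumes "\<mu> \<in> eigenvalues_c M"
  shows "cmod \<mu> \<le> spec_rad M"
  unfolding spec_rad_def
  by (rule cSup_upper) (use assms eig_bound in \<open>auto intro!: bdd_aboveI\<close>)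

lemma pow_mat_comm: assumes "(A :: 'a :: semiring_1 mat) \<in> carrier_mat n n"
  shows "A * A ^\<^sub>m k = A ^\<^sub>m k * A"
proof (induction k)
  case 0 then show ?case using assms by simp
next
  case (Suc k)
  have "A * A ^\<^sub>m Suc k = (A * A ^\<^sub>m k) * A"
    using assms by (simp add: assoc_mult_mat[of _ n n _ n _ n])
  also have "\<dots> = A ^\<^sub>m Suc k * A" using Suc by simp
  finally show ?case .
qed

lemma mpow_decay:
  fixes M :: "real^'n^'n"
  assumes sr: "spec_rad M < 1"
  shows "(mpow M \<longlongrightarrow> 0) sequentially"
proof -
  define n where "n = CARD('n)"
  have n_pos: "n > 0" unfolding n_def by simp
  obtain h :: "nat \<Rightarrow> 'n" where h: "bij_betw h {0..<n} UNIV"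
    using ex_bij_betw_nat_finite[of "UNIV::'n set"] n_def by auto
  define idx where "idx = inv_into {0..<n} h"
  have idx_lt: "idx i < n" for i
    using bij_betwE[OF bij_betw_inv_into[OF h]] unfolding idx_def by auto
  have h_idx: "h (idx i) = i" for i
    unfolding idx_def by (rule f_inv_into_f) (use bij_betw_imp_surj_on[OF h] in auto)
  have inj_h: "inj_on h {0..<n}" using h by (rule bij_betw_imp_inj_on)
  have idx_h: "idx (h k) = k" if "k < n" for k
    unfolding idx_def by (rule inv_into_f_f[OF inj_h]) (use that in auto)
  have sumh: "(\<Sum>k\<in>{0..<n}. g (h k)) = (\<Sum>j\<in>UNIV. g j)" for g :: "'n \<Rightarrow> complex"
    by (rule sum.reindex_bij_betw[OF h])
  define tm where "tm N = Matrix.mat n n (\<lambda>(i,j). complex_of_real (N $ h i $ h j))"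
    for N :: "real^'n^'n"
  have tm_car: "tm N \<in> carrier_mat n n" for N unfolding tm_def by simp
  have tm_mult: "tm (N ** K) = tm N * tm K" for N K :: "real^'n^'n"
  proof (rule eq_matI)
    fix i j assume i: "i < dim_row (tm N * tm K)" and j: "j < dim_col (tm N * tm K)"
    hence i': "i < n" and j': "j < n" by (auto simp: tm_def)
    have "(tm N * tm K) $$ (i,j) = (\<Sum>k\<in>{0..<n}. (\<lambda>l. complex_of_real (N $ h i $ l) * complex_of_real (K $ l $ h j)) (h k))"
      using i' j' by (simp add: tm_def scalar_prod_def)
    also have "\<dots> = (\<Sum>l\<in>UNIV. complex_of_real (N $ h i $ l) * complex_of_real (K $ l $ h j))"
      by (rule sumh)
    also have "\<dots> = tm (N ** K) $$ (i,j)"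
      using i' j' by (simp add: tm_def matrix_matrix_mult_def)
    finally show "tm (N ** K) $$ (i,j) = (tm N * tm K) $$ (i,j)" by simp
  qed (auto simp: tm_def)
  have tm_one: "tm (Finite_Cartesian_Product.mat 1) = 1\<^sub>m n"
  proof (rule eq_matI)
    fix i j assume "i < dim_row (1\<^sub>m n :: complex mat)" "j < dim_col (1\<^sub>m n :: complex mat)"
    hence i': "i < n" and j': "j < n" by auto
    have "h i = h j \<longleftrightarrow> i = j" using inj_h i' j' by (auto dest: inj_onD)
    thus "tm (Finite_Cartesian_Product.mat 1) $$ (i,j) = 1\<^sub>m n $$ (i,j)"
      using i' j' by (simp add: tm_def Finite_Cartesian_Product.mat_def)
  qed (auto simp: tm_def)
  have tm_pow: "tm (mpow N k) = tm N ^\<^sub>m k" for N k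
  proof (induction k)
    case 0 then show ?case by (simp add: tm_one carrier_matD[OF tm_car])
  next
    case (Suc k)
    then show ?case by (simp add: tm_mult pow_mat_comm[OF tm_car])
  qed
  define s where "s = max 0 (spec_rad M)"
  define r where "r = (1 + s) / 2"
  have s0: "0 \<le> s" and s1: "s < 1" using sr unfolding s_def by auto
  have r0: "0 < r" and r1: "r < 1" and sr': "s < r" using s0 s1 unfolding r_def by auto
  define M' where "M' = (1/r) *\<^sub>R M"
  have MM': "M = r *\<^sub>R M'" using r0 unfolding M'_def by simp
  have spec: "spectral_radius (tm M') < 1"
  proof -
    from spectral_radius_mem_max(1)[OF tm_car n_pos, of M']
    obtain \<mu> where mu: "\<mu> \<in> spectrum (tm M')" and eq: "spectral_radius (tm M') = norm \<mu>"
      by auto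
    from mu obtain v where v: "v \<in> carrier_vec n" "v \<noteq> 0\<^sub>v n" "tm M' *\<^sub>v v = \<mu> \<cdot>\<^sub>v v"
      unfolding spectrum_def eigenvalue_def eigenvector_def by (auto simp: tm_def)
    define w :: "complex^'n" where "w = (\<chi> i. vec_index v (idx i))"
    have "\<exists>k<n. vec_index v k \<noteq> 0"
    proof (rule ccontr)
      assume "\<not> ?thesis"
      hence "v = 0\<^sub>v n" using v(1) by (intro eq_vecI) auto
      thus False using v(2) by simp
    qed
    then obtain k where k: "k < n" "vec_index v k \<noteq> 0" by auto
    have w0: "w \<noteq> 0"
    proof
      assume "w = 0"
      hence "w $ h k = 0" by simp
      thus False using k idx_h[OF k(1)] unfolding w_def by simp
    qed
    have row: "(\<Sum>k\<in>{0..<n}. complex_of_real (M' $ i $ h k) * vec_index v k) = \<mu> * vec_index v (idx i)" for i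
    proof -
      have "vec_index (tm M' *\<^sub>v v) (idx i) = \<mu> * vec_index v (idx i)" using v(3) v(1) idx_lt[of i] by simp
      thus ?thesis using idx_lt[of i] v(1) by (simp add: tm_def scalar_prod_def h_idx)
    qed
    have "(\<chi> i j. complex_of_real (M $ i $ j)) *v w = (r * \<mu>) *s w"
    proof (subst Finite_Cartesian_Product.vec_eq_iff, intro allI)
      fix i
      have "(\<Sum>j\<in>UNIV. complex_of_real (M $ i $ j) * w $ j)
          = (\<Sum>k\<in>{0..<n}. (\<lambda>j. complex_of_real (M $ i $ j) * w $ j) (h k))"
        by (rule sumh[symmetric])
      also have "\<dots> = (\<Sum>k\<in>{0..<n}. complex_of_real r * (complex_of_real (M' $ i $ h k) * vec_index v k))"
        by (rule sum.cong) (auto simp: w_def idx_h MM')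
      also have "\<dots> = complex_of_real r * (\<mu> * vec_index v (idx i))"
        by (simp add: sum_distrib_left[symmetric] row)
      finally show "((\<chi> i j. complex_of_real (M $ i $ j)) *v w) $ i = ((r * \<mu>) *s w) $ i"
        by (simp add: matrix_vector_mult_def w_def)
    qed
    hence "complex_of_real r * \<mu> \<in> eigenvalues_c M" using w0 unfolding eigenvalues_c_def by auto
    from eig_le_spec_rad[OF this] have "r * cmod \<mu> \<le> spec_rad M" using r0 by (simp add: norm_mult)
    also have "\<dots> \<le> s" unfolding s_def by simp
    also have "\<dots> < r * 1" using sr' by simp
    finally have "cmod \<mu> < 1" using r0 by (simp only: mult_less_cancel_left_pos)
    thus ?thesis using eq by simp
  qed
  from char_poly_factorized[OF tm_car, of M'] obtain as
    where "char_poly (tm M') = (\<Prod>a\<leftarrow>as. [:- a, 1:])" by auto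
  from jordan_nf_exists[OF tm_car this] have jnf: "\<exists>n_as. jordan_nf (tm M') n_as" .
  from spectral_radius_jnf_norm_bound_less_1[OF tm_car spec jnf]
  obtain c where c: "\<And>k. norm_bound (tm M' ^\<^sub>m k) c" by auto
  have entry: "\<bar>mpow M' k $ i $ j\<bar> \<le> c" for k i j
  proof -
    have "norm ((tm M' ^\<^sub>m k) $$ (idx i, idx j)) \<le> c"
      using c[of k] idx_lt[of i] idx_lt[of j] tm_car[of M'] unfolding norm_bound_def by auto
    thus ?thesis unfolding tm_pow[symmetric] using idx_lt[of i] idx_lt[of j]
      by (simp add: tm_def h_idx)
  qed
  have scale: "mpow M k = r ^ k *\<^sub>R mpow M' k" for k
  proof (induction k)
    case 0 then show ?case by simp
  next
    case (Suc k)
    have "mpow M (Suc k) = M ** (r ^ k *\<^sub>R mpow M' k)" using Suc by simp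
    also have "\<dots> = (r ^ k * r) *\<^sub>R M' ** mpow M' k"
      by (simp add: MM' scalar_matrix_assoc matrix_scalar_ac)
    also have "\<dots> = r ^ Suc k *\<^sub>R mpow M' (Suc k)"
      by (simp add: scalar_matrix_assoc power_commutes)
    finally show ?case .
  qed
  show ?thesis
  proof (rule mat_tendstoI)
    fix i j
    have lim0: "(\<lambda>k. r ^ k * c) \<longlonglongrightarrow> 0"
      by (rule tendsto_mult_left_zero[OF LIMSEQ_power_zero]) (use r0 r1 in auto)
    have ev: "\<forall>\<^sub>F k in sequentially. norm (mpow M k $ i $ j) \<le> r ^ k * c"
    proof (rule always_eventually, rule allI)
      fix k
      have "norm (mpow M k $ i $ j) = r ^ k * \<bar>mpow M' k $ i $ j\<bar>"
        using r0 by (simp add: scale abs_mult)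
      also have "\<dots> \<le> r ^ k * c" using entry r0 by (intro mult_left_mono) auto
      finally show "norm (mpow M k $ i $ j) \<le> r ^ k * c" .
    qed
    have "(\<lambda>k. mpow M k $ i $ j) \<longlonglongrightarrow> 0"
      by (rule Lim_null_comparison[OF ev lim0])
    thus "(\<lambda>k. mpow M k $ i $ j) \<longlonglongrightarrow> 0 $ i $ j" by simp
  qed
qed


lemma grp_id: "(a::'a::ab_group_add) - b = (c - b) + (a - c)"
  by (simp add: algebra_simps)

lemma sigma_r_psd:
  fixes A :: "real^'nx^'nx" and C :: "real^'nx^'ny" and Bw :: "real^'nw^'nx"
    and Dw :: "real^'nw^'ny" and L :: "real^'ny^'nx"
  assumes sr: "spec_rad (A - L ** C) < 1"
  shows "psd (Sigma_r A C Bw Dw L)"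
proof -
  define M where "M = A - L ** C"
  define G where "G = Bw - L ** Dw"
  have lim: "(mpow M \<longlongrightarrow> 0) sequentially" using mpow_decay[OF sr] unfolding M_def .
  have ex: "\<exists>!S. S = M ** S ** transpose M + G ** transpose G" by (rule lyap_ex1[OF lim])
  define S where "S = Sigma_x A C Bw Dw L"
  have Sdef: "S = (THE S. S = M ** S ** transpose M + G ** transpose G)"
    unfolding S_def Sigma_x_def M_def G_def ..
  have Seq: "S = M ** S ** transpose M + G ** transpose G"
    using theI'[OF ex] unfolding Sdef[symmetric] .
  have Spsd: "psd S" by (rule lyap_psd[OF lim Seq])
  have symS: "transpose S = S" using Spsd unfolding psd_def by simp
  have sym: "transpose (C ** S ** transpose C + Dw ** transpose Dw) = C ** S ** transpose C + Dw ** transpose Dw"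
    by (simp add: transp_add matrix_transpose_mul transpose_transpose symS matrix_mul_assoc)
  have q: "0 \<le> x \<bullet> ((C ** S ** transpose C + Dw ** transpose Dw) *v x)" for x
  proof -
    have "x \<bullet> ((C ** S ** transpose C) *v x) = (transpose C *v x) \<bullet> (S *v (transpose C *v x))"
      by (rule quad_conj)
    also have "\<dots> \<ge> 0" using Spsd unfolding psd_def by simp
    finally have "0 \<le> x \<bullet> ((C ** S ** transpose C) *v x)" .
    thus ?thesis using quad_gram[of x Dw]
      by (simp add: matrix_vector_mult_add_rdistrib inner_add_right)
  qed
  show ?thesis unfolding Sigma_r_def S_def[symmetric] psd_def using sym q by simp
qed

lemma psd_add: "psd A \<Longrightarrow> psd B \<Longrightarrow> psd (A + (B::real^'n^'n))"
  unfolding psd_def by (simp add: transp_add matrix_vector_mult_add_rdistrib inner_add_right)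

lemma transp_scale: "transpose (c *\<^sub>R A) = c *\<^sub>R transpose (A::real^'n^'m)"
  by (simp add: transpose_def Finite_Cartesian_Product.vec_eq_iff)

lemma transp_diff: "transpose (A - B) = transpose A - transpose (B::real^'n^'m)"
  by (simp add: transpose_def Finite_Cartesian_Product.vec_eq_iff)

lemma psd_scale: "psd A \<Longrightarrow> 0 \<le> c \<Longrightarrow> psd (c *\<^sub>R (A::real^'n^'n))"
  unfolding psd_def by (auto simp: transp_scale scaleR_matrix_vector_assoc[symmetric] intro!: mult_nonneg_nonneg)

lemma psd_congr: "psd N \<Longrightarrow> psd (transpose D ** N ** (D::real^'m^'n))"
  unfolding psd_def
proof (intro conjI allI)
  assume h: "transpose N = N \<and> (\<forall>x. 0 \<le> x \<bullet> (N *v x))"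
  show "transpose (transpose D ** N ** D) = transpose D ** N ** D"
    using h by (simp add: matrix_transpose_mul transpose_transpose matrix_mul_assoc)
  fix x
  have "x \<bullet> ((transpose D ** N ** transpose (transpose D)) *v x)
      = (transpose (transpose D) *v x) \<bullet> (N *v (transpose (transpose D) *v x))"
    by (rule quad_conj)
  thus "0 \<le> x \<bullet> ((transpose D ** N ** D) *v x)" using h by (simp add: transpose_transpose)
qed

lemma inv_props:
  fixes P :: "real^'n^'n"
  assumes "invertible P"
  shows "P ** matrix_inv P = Finite_Cartesian_Product.mat 1"
    "matrix_inv P ** P = Finite_Cartesian_Product.mat 1"
proof -
  have "\<exists>P'. P ** P' = Finite_Cartesian_Product.mat 1 \<and> P' ** P = Finite_Cartesian_Product.mat 1"
    using assms unfolding invertible_def by blast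
  from someI_ex[OF this]
  show "P ** matrix_inv P = Finite_Cartesian_Product.mat 1"
    "matrix_inv P ** P = Finite_Cartesian_Product.mat 1"
    unfolding matrix_inv_def by auto
qed

lemma inv_sym:
  fixes P :: "real^'n^'n"
  assumes "invertible P" "transpose P = P"
  shows "transpose (matrix_inv P) = matrix_inv P"
proof -
  have l: "transpose (matrix_inv P) ** P = Finite_Cartesian_Product.mat 1"
    using arg_cong[OF inv_props(1)[OF assms(1)], of transpose] assms(2)
    by (simp add: matrix_transpose_mul transpose_mat)
  have "transpose (matrix_inv P) = transpose (matrix_inv P) ** (P ** matrix_inv P)"
    by (simp add: inv_props[OF assms(1)] matrix_mul_rid)
  also have "\<dots> = matrix_inv P" by (simp add: matrix_mul_assoc l matrix_mul_lid)
  finally show ?thesis .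
qed

lemma inv_anti:
  fixes P Q :: "real^'n^'n"
  assumes P: "psd P" and PQ: "psd (Q - P)" and iP: "invertible P" and iQ: "invertible Q"
  shows "x \<bullet> (matrix_inv Q *v x) \<le> x \<bullet> (matrix_inv P *v x)"
proof -
  define y where "y = matrix_inv Q *v x"
  define z where "z = matrix_inv P *v x"
  have Qy: "Q *v y = x" unfolding y_def
    by (simp add: matrix_vector_mul_assoc inv_props[OF iQ])
  have Pz: "P *v z = x" unfolding z_def
    by (simp add: matrix_vector_mul_assoc inv_props[OF iP])
  have symP: "transpose P = P" using P unfolding psd_def by simp
  have sw: "y \<bullet> (P *v z) = z \<bullet> (P *v y)"
    using dot_transp[of y P z] symP by (simp add: inner_commute)
  have "0 \<le> (y - z) \<bullet> (P *v (y - z))" using P unfolding psd_def by simp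
  also have "\<dots> = y \<bullet> (P *v y) - y \<bullet> (P *v z) - z \<bullet> (P *v y) + z \<bullet> (P *v z)"
    by (simp add: matrix_vector_mult_diff_distrib inner_diff_left inner_diff_right)
  also have "\<dots> = y \<bullet> (P *v y) - 2 * (y \<bullet> x) + z \<bullet> x"
    using sw Pz by simp
  finally have h1: "0 \<le> y \<bullet> (P *v y) - 2 * (y \<bullet> x) + z \<bullet> x" .
  have "0 \<le> y \<bullet> ((Q - P) *v y)" using PQ unfolding psd_def by simp
  also have "\<dots> = y \<bullet> x - y \<bullet> (P *v y)"
    by (simp add: matrix_vector_mult_diff_rdistrib inner_diff_right Qy)
  finally have h2: "0 \<le> y \<bullet> x - y \<bullet> (P *v y)" .
  from h1 h2 have "y \<bullet> x \<le> z \<bullet> x" by simp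
  thus ?thesis unfolding y_def z_def by (simp add: inner_commute)
qed

hide_type (open) Matrix.vec

theorem proposition1:
  fixes A :: "real^'nx^'nx" and C :: "(real^'nx, 'ny::{finite,linorder}) vec"
    and Bw :: "real^'nw^'nx"
    and Dw :: "(real^'nw, 'ny) vec" and Lkal :: "((real, 'ny) vec)^'nx"
    and j :: "'na::{finite,linorder} \<Rightarrow> 'ny"
    and W :: "((real, 'ny) vec, 'ny) vec"
  assumes det: "detectable A C"
    and stab: "stabilizable A Bw"
    and inv: "\<And>L. spec_rad (A - L ** C) < 1 \<Longrightarrow> invertible (Sigma_r A C Bw Dw L)"
    and kal_stab: "spec_rad (A - Lkal ** C) < 1"
    and kal_min: "\<And>L. spec_rad (A - L ** C) < 1 \<Longrightarrow>
                    loewner_le (Sigma_r A C Bw Dw Lkal) (Sigma_r A C Bw Dw L)"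
    and j_mono: "strict_mono j"
    and W_psd: "psd W"
  shows "(\<forall>L lam. feasible A C Bw Dw (sel_matrix j) W L lam \<longrightarrow>
             feasible A C Bw Dw (sel_matrix j) W Lkal lam) \<and>
         (\<forall>L. spec_rad (A - L ** C) < 1 \<longrightarrow>
             J0 A C Bw Dw (sel_matrix j) W L \<le> J0 A C Bw Dw (sel_matrix j) W Lkal)"
proof -
  let ?D = "sel_matrix j"
  let ?P = "Sigma_r A C Bw Dw Lkal"
  have Ppsd: "psd ?P" by (rule sigma_r_psd[OF kal_stab])
  have iP: "invertible ?P" by (rule inv[OF kal_stab])
  have key: "x \<bullet> (matrix_inv (Sigma_r A C Bw Dw L) *v x) \<le> x \<bullet> (matrix_inv ?P *v x)
      \<and> psd (matrix_inv ?P - matrix_inv (Sigma_r A C Bw Dw L))"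
    if sr: "spec_rad (A - L ** C) < 1" for L x
  proof -
    let ?Q = "Sigma_r A C Bw Dw L"
    have PQ: "psd (?Q - ?P)" using kal_min[OF sr] unfolding loewner_le_def .
    have iQ: "invertible ?Q" by (rule inv[OF sr])
    have symP: "transpose ?P = ?P" using Ppsd unfolding psd_def by simp
    have "transpose ?Q - ?P = ?Q - ?P" using symP PQ unfolding psd_def by (simp add: transp_diff)
    hence symQ: "transpose ?Q = ?Q" by simp
    have anti: "y \<bullet> (matrix_inv ?Q *v y) \<le> y \<bullet> (matrix_inv ?P *v y)" for y
      by (rule inv_anti[OF Ppsd PQ iP iQ])
    have "psd (matrix_inv ?P - matrix_inv ?Q)"
      unfolding psd_def
      using anti inv_sym[OF iP symP] inv_sym[OF iQ symQ]
      by (simp add: transp_diff matrix_vector_mult_diff_rdistrib inner_diff_right)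
    thus ?thesis using anti by blast
  qed
  have part1: "feasible A C Bw Dw ?D W Lkal lam" if f: "feasible A C Bw Dw ?D W L lam" for L lam
  proof -
    let ?Q = "Sigma_r A C Bw Dw L"
    have lam: "lam > 0" and sr: "spec_rad (A - L ** C) < 1"
      and ps: "psd ((1/2) *\<^sub>R (transpose ?D ** matrix_inv ?Q ** ?D) - lam *\<^sub>R (transpose ?D ** W ** ?D))"
      using f unfolding feasible_def by auto
    have d: "psd ((1/2) *\<^sub>R (transpose ?D ** (matrix_inv ?P - matrix_inv ?Q) ** ?D))"
      using key[OF sr] by (intro psd_scale psd_congr) auto
    have eq: "(1/2) *\<^sub>R (transpose ?D ** matrix_inv ?P ** ?D) - lam *\<^sub>R (transpose ?D ** W ** ?D)
      = ((1/2) *\<^sub>R (transpose ?D ** matrix_inv ?Q ** ?D) - lam *\<^sub>R (transpose ?D ** W ** ?D))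
        + (1/2) *\<^sub>R (transpose ?D ** (matrix_inv ?P - matrix_inv ?Q) ** ?D)"
      unfolding mmult_ldiff mmult_rdiff scaleR_diff_right by (rule grp_id)
    show ?thesis unfolding feasible_def eq
      by (intro conjI lam kal_stab psd_add[OF ps d])
  qed
  have part2: "J0 A C Bw Dw ?D W L \<le> J0 A C Bw Dw ?D W Lkal"
    if sr: "spec_rad (A - L ** C) < 1" for L
    unfolding J0_def
  proof (rule INF_mono)
    fix a assume a: "a \<in> {a. 1 \<le> (?D *v a) \<bullet> (W *v (?D *v a))}"
    show "\<exists>b\<in>{a. 1 \<le> (?D *v a) \<bullet> (W *v (?D *v a))}.
      ereal (1/2 * ((?D *v b) \<bullet> (matrix_inv (Sigma_r A C Bw Dw L) *v (?D *v b))))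
      \<le> ereal (1/2 * ((?D *v a) \<bullet> (matrix_inv ?P *v (?D *v a))))"
      by (rule bexI[OF _ a]) (use key[OF sr, of "?D *v a"] in auto)
  qed
  show ?thesis using part1 part2 by blast
qed

end
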